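(* Let $n_0$ be a sufficiently large universal constant. If $n \ge n_0$ and $\beta = 8 n$, then $|\mathcal{G}_{2n,\beta}| \ge 2^{n^2/2}$.
   Context: Fix disjoint vertex sets $L,R$ with $|L|=|R|=n$ and a fixed perfect matching $M$ of directed edges from $L$ to $R$. $\mathcal{G}_{2n}$ is the set of all unweighted directed graphs on vertex set $L\cup R$ whose set of edges from $L$ to $R$ is exactly $M$, whose edges from $R$ to $L$ form an arbitrary subset of $R\times L$, and which have no other edges (so $|\mathcal{G}_{2n}|=2^{n^2}$). A directed graph (with unit weights) is $\beta$-balanced if it is strongly connected and for every $\varnothing\ne S\subsetneq V$ the number of edges leaving $S$ is at most $\beta$ times the number of edges entering $S$. $\mathcal{G}_{2n,\beta}\subseteq\mathcal{G}_{2n}$ is the subset of $\beta$-balanced graphs. *)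

theory Defs
  imports Complex_Main
begin

definition Lset :: "nat \<Rightarrow> nat set" where
  "Lset n = {0..<n}"

definition Rset :: "nat \<Rightarrow> nat set" where
  "Rset n = {n..<2*n}"

definition Vset :: "nat \<Rightarrow> nat set" where
  "Vset n = Lset n \<union> Rset n"

definition Mmatch :: "nat \<Rightarrow> (nat \<times> nat) set" where
  "Mmatch n = {(i, n + i) | i. i < n}"

definition G2n :: "nat \<Rightarrow> (nat \<times> nat) set set" where
  "G2n n = {E. \<exists>F. F \<subseteq> Rset n \<times> Lset n \<and> E = Mmatch n \<union> F}"

definition strongly_connected :: "'a set \<Rightarrow> ('a \<times> 'a) set \<Rightarrow> bool" where
  "strongly_connected V E \<longleftrightarrow> (\<forall>u\<in>V. \<forall>v\<in>V. (u, v) \<in> (E \<inter> (V \<times> V))\<^sup>*)"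

definition out_edges :: "('a \<times> 'a) set \<Rightarrow> 'a set \<Rightarrow> ('a \<times> 'a) set" where
  "out_edges E S = {(u, v) \<in> E. u \<in> S \<and> v \<notin> S}"

definition in_edges :: "('a \<times> 'a) set \<Rightarrow> 'a set \<Rightarrow> ('a \<times> 'a) set" where
  "in_edges E S = {(u, v) \<in> E. u \<notin> S \<and> v \<in> S}"

definition balanced :: "'a set \<Rightarrow> ('a \<times> 'a) set \<Rightarrow> real \<Rightarrow> bool" where
  "balanced V E \<beta> \<longleftrightarrow> strongly_connected V E \<and>
     (\<forall>S. S \<noteq> {} \<and> S \<subset> V \<longrightarrow>
        real (card (out_edges E S)) \<le> \<beta> * real (card (in_edges E S)))"

definition G2n_beta :: "nat \<Rightarrow> real \<Rightarrow> (nat \<times> nat) set set" where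
  "G2n_beta n \<beta> = {E \<in> G2n n. balanced (Vset n) E \<beta>}"

end

theory Submission imports Defs begin
definition Pfix :: "nat \<Rightarrow> nat \<Rightarrow> (nat \<times> nat) set" where
  "Pfix n k = {(r,l). r \<in> Rset n \<and> l \<in> Lset n \<and> (r < n + k \<or> l < k)}"

lemma sc:
  assumes k: "0 < k" "k \<le> n" and P: "Pfix n k \<subseteq> F" and FR: "F \<subseteq> Rset n \<times> Lset n"
  shows "strongly_connected (Vset n) (Mmatch n \<union> F)"
proof -
  let ?E = "(Mmatch n \<union> F) \<inter> (Vset n \<times> Vset n)"
  have inF: "(r,l) \<in> F" if "n \<le> r" "r < 2*n" "l < n" "r < n + k \<or> l < k" for r l
    using P that by (auto simp: Pfix_def Rset_def Lset_def)
  have inM: "(i, n+i) \<in> ?E" if "i < n" for i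
    using that by (auto simp: Mmatch_def Vset_def Lset_def Rset_def)
  have inE: "(r,l) \<in> ?E" if "n \<le> r" "r < 2*n" "l < n" "r < n + k \<or> l < k" for r l
    using inF[OF that] that by (auto simp: Vset_def Lset_def Rset_def)
  have to0: "(u,0) \<in> ?E\<^sup>*" if "u \<in> Vset n" for u
  proof (cases "u < n")
    case True
    have "(u, n+u) \<in> ?E" using inM True by blast
    moreover have "(n+u, 0) \<in> ?E" using inE[of "n+u" 0] True k by auto
    ultimately show ?thesis by (meson converse_rtrancl_into_rtrancl r_into_rtrancl)
  next
    case False
    then have "(u, 0) \<in> ?E" using inE[of u 0] that k by (auto simp: Vset_def Lset_def Rset_def)
    then show ?thesis by blast
  qed
  have from0: "(0,u) \<in> ?E\<^sup>*" if "u \<in> Vset n" for u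
  proof -
    have n0: "(0, n) \<in> ?E" using inM[of 0] k by auto
    show ?thesis
    proof (cases "u < n")
      case True
      have "(n, u) \<in> ?E" using inE[of n u] True k by auto
      with n0 show ?thesis by (meson converse_rtrancl_into_rtrancl r_into_rtrancl)
    next
      case False
      then have u: "n \<le> u" "u < 2*n" using that by (auto simp: Vset_def Lset_def Rset_def)
      have "(n, u-n) \<in> ?E" using inE[of n "u-n"] u k by auto
      moreover have "(u-n, u) \<in> ?E" using inM[of "u-n"] u by auto
      ultimately show ?thesis using n0
        by (meson converse_rtrancl_into_rtrancl r_into_rtrancl)
    qed
  qed
  show ?thesis unfolding strongly_connected_def
    using to0 from0 by (meson rtrancl_trans)
qed

lemma cut:
  assumes n: "8 \<le> n" and kd: "k = n div 4" and P: "Pfix n k \<subseteq> F" and FR: "F \<subseteq> Rset n \<times> Lset n"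
    and S: "S \<subseteq> Vset n"
  shows "card (out_edges (Mmatch n \<union> F) S) \<le> 8 * n * card (in_edges (Mmatch n \<union> F) S)"
proof -
  let ?E = "Mmatch n \<union> F"
  define X where "X = {i. i < n \<and> i \<in> S}"
  define Y where "Y = {i. i < n \<and> n + i \<in> S}"
  have X: "X \<subseteq> {0..<n}" and Y: "Y \<subseteq> {0..<n}" by (auto simp: X_def Y_def)
  have fX: "finite X" and fY: "finite Y" using X Y finite_subset by auto
  have cX: "card X \<le> n" and cY: "card Y \<le> n" using card_mono[OF _ X] card_mono[OF _ Y] by auto
  have Efin: "finite ?E"
  proof -
    have "?E \<subseteq> {0..<2*n} \<times> {0..<2*n}" using FR by (auto simp: Mmatch_def Rset_def Lset_def)
    then show ?thesis by (rule finite_subset) auto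
  qed
  have inF: "(r,l) \<in> F" if "n \<le> r" "r < 2*n" "l < n" "r < n + k \<or> l < k" for r l
    using P that by (auto simp: Pfix_def Rset_def Lset_def)
  have outsub: "out_edges ?E S \<subseteq> (\<lambda>i. (i, n+i)) ` (X - Y) \<union> ((\<lambda>i. n+i) ` Y) \<times> ({0..<n} - X)"
  proof
    fix e assume e: "e \<in> out_edges ?E S"
    then obtain u v where uv: "e = (u,v)" "(u,v) \<in> ?E" "u \<in> S" "v \<notin> S"
      by (auto simp: out_edges_def)
    show "e \<in> (\<lambda>i. (i, n+i)) ` (X - Y) \<union> ((\<lambda>i. n+i) ` Y) \<times> ({0..<n} - X)"
    proof (cases "(u,v) \<in> Mmatch n")
      case True
      then obtain i where "u = i" "v = n + i" "i < n" by (auto simp: Mmatch_def)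
      then show ?thesis using uv by (auto simp: X_def Y_def)
    next
      case False
      then have "(u,v) \<in> F" using uv by auto
      then have "n \<le> u" "u < 2*n" "v < n" using FR by (auto simp: Rset_def Lset_def)
      then have "u - n \<in> Y" "u = n + (u - n)" "v \<in> {0..<n} - X" using uv by (auto simp: X_def Y_def)
      then show ?thesis using uv by blast
    qed
  qed
  have cout: "card (out_edges ?E S) \<le> card (X - Y) + card Y * (n - card X)"
  proof -
    have "card (out_edges ?E S) \<le> card ((\<lambda>i. (i, n+i)) ` (X - Y) \<union> ((\<lambda>i. n+i) ` Y) \<times> ({0..<n} - X))"
      by (rule card_mono[OF _ outsub]) (use fX fY in auto)
    also have "\<dots> \<le> card ((\<lambda>i. (i, n+i)) ` (X - Y)) + card (((\<lambda>i. n+i) ` Y) \<times> ({0..<n} - X))"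
      by (rule card_Un_le)
    also have "\<dots> \<le> card (X - Y) + card Y * (n - card X)"
    proof -
      have "card ((\<lambda>i. (i, n+i)) ` (X - Y)) \<le> card (X - Y)" by (rule card_image_le) (use fX in auto)
      moreover have "card ((\<lambda>i. n+i) ` Y) \<le> card Y" by (rule card_image_le[OF fY])
      moreover have "card ({0..<n} - X) = n - card X" using X fX by (simp add: card_Diff_subset)
      ultimately show ?thesis by (simp add: card_cartesian_product add_le_mono mult_le_mono1)
    qed
    finally show ?thesis .
  qed
  have inbound: "card (Y - X) + card G \<le> card (in_edges ?E S)" if G: "G \<subseteq> in_edges ?E S" "G \<subseteq> F" for G
  proof -
    have M: "(\<lambda>i. (i, n+i)) ` (Y - X) \<subseteq> in_edges ?E S"
      by (auto simp: in_edges_def Mmatch_def X_def Y_def)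
    have disj: "(\<lambda>i. (i, n+i)) ` (Y - X) \<inter> G = {}" using G(2) FR Y by (auto simp: Rset_def Lset_def)
    have fin: "finite (in_edges ?E S)" using Efin by (rule rev_finite_subset) (auto simp: in_edges_def)
    have fG: "finite G" using fin G(1) finite_subset by auto
    have "card ((\<lambda>i. (i, n+i)) ` (Y - X) \<union> G) \<le> card (in_edges ?E S)"
      using M G(1) fin by (intro card_mono) auto
    moreover have "card ((\<lambda>i. (i, n+i)) ` (Y - X) \<union> G) = card (Y - X) + card G"
      using disj fG fY by (subst card_Un_disjoint) (auto simp: card_image inj_on_def)
    ultimately show ?thesis by simp
  qed
  have k1: "1 \<le> k" "k \<le> n" using n kd by auto
  show ?thesis
  proof (cases "{0..<k} \<subseteq> Y")
    case False
    then have "\<not> {0..<k} \<subseteq> Y" by blast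
    then obtain j where "j \<in> {0..<k}" "j \<notin> Y" by blast
    then have j: "j < k" "j \<notin> Y" by auto
    define G where "G = {n+j} \<times> X"
    have G1: "G \<subseteq> in_edges ?E S" "G \<subseteq> F" using j k1 inF[of "n+j"]
      by (auto simp: G_def in_edges_def X_def Y_def)
    have cG: "card G = card X" by (simp add: G_def card_cartesian_product)
    have a: "card (Y - X) + card X \<le> card (in_edges ?E S)" using inbound[OF G1] cG by simp
    have "card Y \<le> card (Y - X) + card X"
      using card_Int_Diff[OF fY, of X] card_mono[OF fX, of "Y \<inter> X"] by auto
    then have b: "card Y \<le> card (in_edges ?E S)" "card X \<le> card (in_edges ?E S)" using a by auto
    have c: "card (X - Y) \<le> card X" using fX by (simp add: card_mono)
    have "card (out_edges ?E S) \<le> card X + card Y * n"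
      using cout c by (meson add_le_mono diff_le_self le_trans mult_le_mono2)
    also have "\<dots> \<le> card (in_edges ?E S) + card (in_edges ?E S) * n"
      using b by (simp add: add_le_mono mult_le_mono1)
    also have "\<dots> \<le> 8 * n * card (in_edges ?E S)" using n by (simp add: algebra_simps)
    finally show ?thesis .
  next
    case True
    show ?thesis
    proof (cases "Y = {0..<n}")
      case True
      have "X - Y = {}" using X True by auto
      have "card Y = n" using True by simp
      then have o: "card (out_edges ?E S) \<le> n * (n - card X)" using cout \<open>X - Y = {}\<close> by simp
      have "card (Y - X) = n - card X" using True X fX by (simp add: card_Diff_subset)
      then have "n - card X \<le> card (in_edges ?E S)" using inbound[of "{}"] by simp
      then have "n * (n - card X) \<le> 8 * n * card (in_edges ?E S)"
      proof -
        have "n * (n - card X) \<le> n * card (in_edges ?E S)" using \<open>n - card X \<le> _\<close> by (rule mult_le_mono2)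
        also have "\<dots> \<le> 8 * n * card (in_edges ?E S)" by simp
        finally show ?thesis .
      qed
      then show ?thesis using o by linarith
    next
      case False
      then have "\<not> {0..<n} \<subseteq> Y" using Y by blast
      then obtain j where "j \<in> {0..<n}" "j \<notin> Y" by blast
      then have j: "j < n" "j \<notin> Y" by auto
      define G where "G = {n+j} \<times> (X \<inter> {0..<k})"
      have G1: "G \<subseteq> in_edges ?E S" "G \<subseteq> F" using j k1 inF[of "n+j"]
        by (auto simp: G_def in_edges_def X_def Y_def)
      have cG: "card G = card (X \<inter> {0..<k})" by (simp add: G_def card_cartesian_product)
      have "{0..<k} - X \<subseteq> Y - X" using \<open>{0..<k} \<subseteq> Y\<close> by auto
      then have "card ({0..<k} - X) \<le> card (Y - X)" using fY by (intro card_mono) auto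
      moreover have "card ({0..<k} - X) + card (X \<inter> {0..<k}) = k"
        using card_Int_Diff[of "{0..<k}" X] by (simp add: Int_commute)
      ultimately have kin: "k \<le> card (in_edges ?E S)" using inbound[OF G1] cG by linarith
      have "card (X - Y) \<le> n" using cX fX by (meson card_mono Diff_subset le_trans)
      then have "card (out_edges ?E S) \<le> n + n * n" using cout cY
        by (meson add_le_mono diff_le_self le_trans mult_le_mono)
      also have "\<dots> = n * (n + 1)" by simp
      also have "\<dots> \<le> n * (8 * k)" using n kd by (intro mult_le_mono2) linarith
      also have "\<dots> \<le> 8 * n * card (in_edges ?E S)" using kin by simp
      finally show ?thesis .
    qed
  qed
qed

theorem lemma5:
  shows "\<exists>n0::nat. \<forall>n\<ge>n0.
     (2::real) powr (real n ^ 2 / 2) \<le> real (card (G2n_beta n (8 * real n)))"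
proof (rule exI[of _ 8], intro allI impI)
  fix n :: nat assume n: "8 \<le> n"
  define k where "k = n div 4"
  define Q where "Q = {n+k..<2*n} \<times> {k..<n}"
  define f where "f = (\<lambda>F0. Mmatch n \<union> (Pfix n k \<union> F0))"
  have k1: "1 \<le> k" "4 * k \<le> n" using n by (auto simp: k_def)
  have QR: "Q \<subseteq> Rset n \<times> Lset n" by (auto simp: Q_def Rset_def Lset_def)
  have PR: "Pfix n k \<subseteq> Rset n \<times> Lset n" by (auto simp: Pfix_def)
  have img: "f ` Pow Q \<subseteq> G2n_beta n (8 * real n)"
  proof
    fix E assume "E \<in> f ` Pow Q"
    then obtain F0 where F0: "F0 \<subseteq> Q" "E = f F0" by auto
    let ?F = "Pfix n k \<union> F0"
    have FR: "?F \<subseteq> Rset n \<times> Lset n" using F0 QR PR by blast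
    have bal: "balanced (Vset n) (Mmatch n \<union> ?F) (8 * real n)"
      unfolding balanced_def
    proof (intro conjI allI impI)
      show "strongly_connected (Vset n) (Mmatch n \<union> ?F)"
        using sc[of k n ?F] k1 FR by auto
    next
      fix S :: "nat set" assume "S \<noteq> {} \<and> S \<subset> Vset n"
      then have S: "S \<subseteq> Vset n" by auto
      have "card (out_edges (Mmatch n \<union> ?F) S) \<le> 8 * n * card (in_edges (Mmatch n \<union> ?F) S)"
        using cut[OF n k_def _ FR S] by auto
      then have "real (card (out_edges (Mmatch n \<union> ?F) S)) \<le> real (8 * n * card (in_edges (Mmatch n \<union> ?F) S))"
        by linarith
      then show "real (card (out_edges (Mmatch n \<union> ?F) S)) \<le> 8 * real n * real (card (in_edges (Mmatch n \<union> ?F) S))"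
        by simp
    qed
    have "E \<in> G2n n" unfolding G2n_def using FR F0 f_def by auto
    then show "E \<in> G2n_beta n (8 * real n)" using bal F0 f_def by (simp add: G2n_beta_def)
  qed
  have inj: "inj_on f (Pow Q)"
  proof (rule inj_onI)
    fix A B assume A: "A \<in> Pow Q" and B: "B \<in> Pow Q" and eq: "f A = f B"
    have d1: "Mmatch n \<inter> Q = {}" by (auto simp: Mmatch_def Q_def)
    have d2: "Pfix n k \<inter> Q = {}" by (auto simp: Pfix_def Q_def)
    have A': "A \<subseteq> Q" using A by simp
    have B': "B \<subseteq> Q" using B by simp
    have 1: "f A \<inter> Q = A" unfolding f_def using A' d1 d2 by blast
    have 2: "f B \<inter> Q = B" unfolding f_def using B' d1 d2 by blast
    have "A = f A \<inter> Q" using 1 by (rule sym)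
    also have "\<dots> = f B \<inter> Q" using eq by (rule arg_cong)
    also have "\<dots> = B" by (rule 2)
    finally show "A = B" .
  qed
  have finG: "finite (G2n_beta n (8 * real n))"
  proof -
    have "G2n_beta n (8 * real n) \<subseteq> Pow ({0..<2*n} \<times> {0..<2*n})"
      by (auto simp: G2n_beta_def G2n_def Mmatch_def Rset_def Lset_def)
    moreover have "finite (Pow ({0..<2*n} \<times> {0..<2*n}))" by simp
    ultimately show ?thesis by (rule finite_subset)
  qed
  have cQ: "card Q = (n - k) * (n - k)" by (simp add: Q_def card_cartesian_product)
  have "card (Pow Q) \<le> card (G2n_beta n (8 * real n))"
  proof -
    have "card (f ` Pow Q) = card (Pow Q)" by (rule card_image[OF inj])
    moreover have "card (f ` Pow Q) \<le> card (G2n_beta n (8 * real n))" by (rule card_mono[OF finG img])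
    ultimately show ?thesis by linarith
  qed
  moreover have "card (Pow Q) = 2 ^ ((n - k) * (n - k))"
  proof -
    have "finite Q" unfolding Q_def by simp
    then have "card (Pow Q) = 2 ^ card Q" by (rule card_Pow)
    then show ?thesis using cQ by simp
  qed
  ultimately have c: "2 ^ ((n - k) * (n - k)) \<le> card (G2n_beta n (8 * real n))" by simp
  have q: "n * n \<le> 2 * ((n - k) * (n - k))"
  proof -
    have "3 * n \<le> 4 * (n - k)" using k1 by linarith
    then have "(3 * n) * (3 * n) \<le> (4 * (n - k)) * (4 * (n - k))" using \<open>3 * n \<le> _\<close> by (rule mult_le_mono)
    then have "9 * (n * n) \<le> 16 * ((n - k) * (n - k))" by (simp add: algebra_simps)
    then show ?thesis by linarith
  qed
  have "(2::real) powr (real n ^ 2 / 2) \<le> 2 powr (real ((n - k) * (n - k)))"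
  proof (rule powr_mono)
    have "real (n * n) \<le> real (2 * ((n - k) * (n - k)))" using q by linarith
    then show "real n ^ 2 / 2 \<le> real ((n - k) * (n - k))" by (simp add: power2_eq_square)
  qed simp
  also have "\<dots> = 2 ^ ((n - k) * (n - k))" by (rule powr_realpow) simp
  also have "\<dots> \<le> real (card (G2n_beta n (8 * real n)))" using c
    by (metis numeral_power_le_of_nat_cancel_iff)
  finally show "(2::real) powr (real n ^ 2 / 2) \<le> real (card (G2n_beta n (8 * real n)))" .
qed

end
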